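(* Let $G$ be a finite undirected graph, $\tau\ge1$ an integer, and $G'$ a subgraph of $G$. Then for every edge $e\in E(G')$, $\phi_\tau(e,G)\ge\phi_\tau(e,G')$.
   Context: Graphs are finite, simple, undirected and unweighted; paths may repeat vertices and their length is the number of edges. For vertices $v,u$ of a graph $H$, $u$ is $\tau$-hop reachable from $v$ in $H$ if there is a path between them in $H$ of length at most $\tau$. $N_\tau(v,H)$ is the set of vertices $u\ne v$ that are $\tau$-hop reachable from $v$ in $H$. For an edge $e=(u,v)$ of $H$, $\Delta_\tau(e,H)=N_\tau(u,H)\cap N_\tau(v,H)$ and $\mathrm{sup}_\tau(e,H)=|\Delta_\tau(e,H)|$. The $(k,\tau)$-truss of a graph $H$ is the maximal subgraph $H'$ of $H$ such that $\mathrm{sup}_\tau(e,H')\ge k-2$ for every $e\in E(H')$ (supports computed inside $H'$) and no more edges of $H$ can be added while keeping this property. The higher-order truss number $\phi_\tau(e,H)$ of an edge $e$ of $H$ is the maximum $k$ such that $e$ belongs to the $(k,\tau)$-truss of $H$. *)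

theory Defs
  imports Main
begin

type_synonym 'a graph = "'a set \<times> 'a set set"

definition verts :: "'a graph \<Rightarrow> 'a set" where "verts H = fst H"
definition edges :: "'a graph \<Rightarrow> 'a set set" where "edges H = snd H"

definition graph :: "'a graph \<Rightarrow> bool" where
  "graph H \<longleftrightarrow> finite (verts H) \<and>
     (\<forall>e\<in>edges H. e \<subseteq> verts H \<and> card e = 2)"

definition subgraph :: "'a graph \<Rightarrow> 'a graph \<Rightarrow> bool" where
  "subgraph H' H \<longleftrightarrow> verts H' \<subseteq> verts H \<and> edges H' \<subseteq> edges H \<and>
     (\<forall>e\<in>edges H'. e \<subseteq> verts H')"

text \<open>A walk (path possibly repeating vertices) given by its vertex sequence;
  its length is the number of edges, i.e. length of the list minus one.\<close>
fun walk :: "'a graph \<Rightarrow> 'a list \<Rightarrow> bool" where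
  "walk H [] = False"
| "walk H [x] = (x \<in> verts H)"
| "walk H (x # y # xs) = ({x, y} \<in> edges H \<and> walk H (y # xs))"

definition hop_reachable :: "nat \<Rightarrow> 'a graph \<Rightarrow> 'a \<Rightarrow> 'a \<Rightarrow> bool" where
  "hop_reachable \<tau> H v u \<longleftrightarrow>
     (\<exists>xs. walk H xs \<and> hd xs = v \<and> last xs = u \<and> length xs - 1 \<le> \<tau>)"

definition nbhd :: "nat \<Rightarrow> 'a \<Rightarrow> 'a graph \<Rightarrow> 'a set" where
  "nbhd \<tau> v H = {u. u \<noteq> v \<and> hop_reachable \<tau> H v u}"

definition sup_edge :: "nat \<Rightarrow> 'a set \<Rightarrow> 'a graph \<Rightarrow> nat" where
  "sup_edge \<tau> e H = card (\<Inter>v\<in>e. nbhd \<tau> v H)"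

definition truss_prop :: "nat \<Rightarrow> nat \<Rightarrow> 'a graph \<Rightarrow> bool" where
  "truss_prop k \<tau> H' \<longleftrightarrow> (\<forall>e\<in>edges H'. int (sup_edge \<tau> e H') \<ge> int k - 2)"

definition is_truss :: "nat \<Rightarrow> nat \<Rightarrow> 'a graph \<Rightarrow> 'a graph \<Rightarrow> bool" where
  "is_truss k \<tau> H H' \<longleftrightarrow> subgraph H' H \<and> truss_prop k \<tau> H' \<and>
     (\<forall>H''. subgraph H'' H \<and> edges H' \<subseteq> edges H'' \<and> truss_prop k \<tau> H''
              \<longrightarrow> edges H'' = edges H')"

definition in_truss :: "nat \<Rightarrow> nat \<Rightarrow> 'a set \<Rightarrow> 'a graph \<Rightarrow> bool" where
  "in_truss k \<tau> e H \<longleftrightarrow> (\<exists>H'. is_truss k \<tau> H H' \<and> e \<in> edges H')"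

definition truss_number :: "nat \<Rightarrow> 'a set \<Rightarrow> 'a graph \<Rightarrow> nat" where
  "truss_number \<tau> e H = (GREATEST k. in_truss k \<tau> e H)"

end

theory Submission
  imports Defs
begin

lemma walk_mono: "verts A \<subseteq> verts B \<Longrightarrow> edges A \<subseteq> edges B \<Longrightarrow> walk A xs \<Longrightarrow> walk B xs"
  by (induction A xs rule: walk.induct) auto

lemma walk_last: "walk A xs \<Longrightarrow> last xs \<in> verts A"
  by (induction A xs rule: walk.induct) auto

lemma nbhd_verts: "nbhd \<tau> v A \<subseteq> verts A"
  unfolding nbhd_def hop_reachable_def using walk_last by fastforce

lemma nbhd_mono: "verts A \<subseteq> verts B \<Longrightarrow> edges A \<subseteq> edges B \<Longrightarrow> nbhd \<tau> v A \<subseteq> nbhd \<tau> v B"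
  unfolding nbhd_def hop_reachable_def using walk_mono by blast

lemma sup_mono:
  assumes "verts A \<subseteq> verts B" "edges A \<subseteq> edges B" "finite (verts B)" "e \<noteq> {}"
  shows "sup_edge \<tau> e A \<le> sup_edge \<tau> e B"
proof -
  obtain v where v: "v \<in> e" using assms(4) by blast
  have "(\<Inter>v\<in>e. nbhd \<tau> v B) \<subseteq> nbhd \<tau> v B" using v by (rule INT_lower)
  also have "\<dots> \<subseteq> verts B" by (rule nbhd_verts)
  finally have fin: "finite (\<Inter>v\<in>e. nbhd \<tau> v B)" using assms(3) by (rule finite_subset)
  have "(\<Inter>v\<in>e. nbhd \<tau> v A) \<subseteq> (\<Inter>v\<in>e. nbhd \<tau> v B)"
    by (rule INF_mono') (rule nbhd_mono[OF assms(1,2)])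
  thus ?thesis unfolding sup_edge_def by (rule card_mono[OF fin])
qed

lemma truss_exists:
  assumes fin: "finite (verts H)" and ev: "\<forall>f\<in>edges H. f \<subseteq> verts H \<and> card f = 2"
    and H0: "subgraph H0 H" "truss_prop k \<tau> H0"
  shows "\<exists>H'. is_truss k \<tau> H H' \<and> edges H0 \<subseteq> edges H'"
proof -
  define S where "S = {X. subgraph X H \<and> truss_prop k \<tau> X}"
  define U where "U = (verts H, \<Union>X\<in>S. edges X)"
  have vU: "verts U = verts H" and eU: "edges U = (\<Union>X\<in>S. edges X)"
    unfolding U_def verts_def edges_def by auto
  have sub: "subgraph U H"
    using ev unfolding subgraph_def vU eU S_def by blast
  have tp: "truss_prop k \<tau> U"
    unfolding truss_prop_def
  proof
    fix f assume "f \<in> edges U"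
    then obtain X where X: "X \<in> S" "f \<in> edges X" using eU by auto
    have sX: "subgraph X H" "truss_prop k \<tau> X" using X(1) S_def by auto
    have "f \<in> edges H" using sX(1) X(2) unfolding subgraph_def by blast
    hence "card f = 2" using ev by blast
    hence "f \<noteq> {}" by (metis card.empty zero_neq_numeral)
    have "sup_edge \<tau> f X \<le> sup_edge \<tau> f U"
    proof (rule sup_mono)
      show "verts X \<subseteq> verts U" using sX(1) vU unfolding subgraph_def by blast
      show "edges X \<subseteq> edges U" using X(1) eU by blast
    qed (use fin vU \<open>f \<noteq> {}\<close> in auto)
    thus "int (sup_edge \<tau> f U) \<ge> int k - 2" using sX(2) X(2) unfolding truss_prop_def by fastforce
  qed
  have "is_truss k \<tau> H U"
    unfolding is_truss_def using sub tp
  proof (intro conjI allI impI; simp?)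
    fix H'' assume "subgraph H'' H \<and> edges U \<subseteq> edges H'' \<and> truss_prop k \<tau> H''"
    hence "H'' \<in> S" "edges U \<subseteq> edges H''" using S_def by auto
    thus "edges H'' = edges U" using eU by auto
  qed
  moreover have "edges H0 \<subseteq> edges U" using H0 eU S_def by auto
  ultimately show ?thesis by blast
qed

lemma in_truss_bound:
  assumes fin: "finite (verts H)" and "e \<noteq> {}" and "in_truss k \<tau> e H"
  shows "k \<le> card (verts H) + 2"
proof -
  obtain H' where H': "is_truss k \<tau> H H'" "e \<in> edges H'" using assms(3) in_truss_def by blast
  hence tp: "int (sup_edge \<tau> e H') \<ge> int k - 2" and sub: "subgraph H' H"
    unfolding is_truss_def truss_prop_def by auto
  obtain v where v: "v \<in> e" using assms(2) by blast
  have "(\<Inter>v\<in>e. nbhd \<tau> v H') \<subseteq> nbhd \<tau> v H'" using v by (rule INT_lower)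
  also have "\<dots> \<subseteq> verts H'" by (rule nbhd_verts)
  also have "\<dots> \<subseteq> verts H" using sub unfolding subgraph_def by blast
  finally have "sup_edge \<tau> e H' \<le> card (verts H)" unfolding sup_edge_def by (rule card_mono[OF fin])
  thus ?thesis using tp by linarith
qed

lemma subgraph_trans: "subgraph A B \<Longrightarrow> subgraph B C \<Longrightarrow> subgraph A C"
  unfolding subgraph_def by blast

theorem lemma2:
  fixes G G' :: "'a graph" and \<tau> :: nat and e :: "'a set"
  assumes "graph G" and "\<tau> \<ge> 1" and "subgraph G' G" and "e \<in> edges G'"
  shows "truss_number \<tau> e G \<ge> truss_number \<tau> e G'"
proof -
  have finG: "finite (verts G)" and evG: "\<forall>f\<in>edges G. f \<subseteq> verts G \<and> card f = 2"
    using assms(1) unfolding graph_def by blast+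
  have finG': "finite (verts G')" using assms(3) finG finite_subset unfolding subgraph_def by blast
  have evG': "\<forall>f\<in>edges G'. f \<subseteq> verts G' \<and> card f = 2"
    using assms(3) evG unfolding subgraph_def by blast
  have "card e = 2" using evG' assms(4) by blast
  hence ne: "e \<noteq> {}" by (metis card.empty zero_neq_numeral)
  have "subgraph G' G'" unfolding subgraph_def using evG' by blast
  moreover have "truss_prop 0 \<tau> G'" unfolding truss_prop_def by auto
  ultimately obtain H0 where "is_truss 0 \<tau> G' H0" "edges G' \<subseteq> edges H0"
    using truss_exists[OF finG' evG'] by blast
  hence "in_truss 0 \<tau> e G'" using assms(4) in_truss_def by blast
  hence it': "in_truss (truss_number \<tau> e G') \<tau> e G'"
    unfolding truss_number_def
    by (rule GreatestI_nat[where b="card (verts G') + 2"]) (rule in_truss_bound[OF finG' ne])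
  then obtain H' where H': "is_truss (truss_number \<tau> e G') \<tau> G' H'" "e \<in> edges H'"
    using in_truss_def by blast
  have "subgraph H' G" using H'(1) assms(3) subgraph_trans unfolding is_truss_def by blast
  moreover have "truss_prop (truss_number \<tau> e G') \<tau> H'" using H'(1) is_truss_def by blast
  ultimately obtain H where "is_truss (truss_number \<tau> e G') \<tau> G H" "edges H' \<subseteq> edges H"
    using truss_exists[OF finG evG] by blast
  hence "in_truss (truss_number \<tau> e G') \<tau> e G" using H'(2) in_truss_def by blast
  thus ?thesis unfolding truss_number_def
    by (rule Greatest_le_nat[where b="card (verts G) + 2"]) (rule in_truss_bound[OF finG ne])
qed

end
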